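(* Assume $X=\{0,1\}^n$, $R(X)=[0,1]^n$, $Q'$ is monotone submodular on $X$ (viewed as a set function on $2^{[n]}$ via indicator vectors), and its extension $Q:[0,1]^n\to\mathbb{R}$ is component-wise monotonically nondecreasing on $[0,1]^n$. Then for every $\hat{\mathbf{x}}\in[0,1]^n$, the set function $I\mapsto g_{\hat{\mathbf{x}}}^Q(I)$ on $2^{[n]}$ is monotone submodular.
   Context: $Q(\mathbf{x})=Q'(\mathbf{x})$ for $\mathbf{x}\in\{0,1\}^n$. A set function $f:2^{[n]}\to\mathbb{R}$ is monotone submodular if $f(S)\le f(T)$ whenever $S\subseteq T\subseteq[n]$, and $f(S\cup\{j\})+f(S\cup\{k\})\geq f(S\cup\{j,k\})+f(S)$ for all $S\subseteq[n]$ and distinct $j,k\in[n]\setminus S$. A function of binary variables is identified with a set function via $f(A)=f(\chi_A)$, $\chi_A$ the indicator vector of $A$. For $I\subseteq[n]$ and $\chi\in\{0,1\}^I$, $\nu_I^Q(\chi):=\min\{Q(\mathbf{x}):\mathbf{x}\in[0,1]^n,\ \mathbf{x}_I=\chi\}$, where $\mathbf{x}_I$ is the subvector indexed by $I$. The cut violation function is $$g_{\hat{\mathbf{x}}}^Q(I)=\max_{\mu\in\mathbb{R}^I,\eta\in\mathbb{R}}\Big\{\sum_{i\in I}\mu_i\hat{x}_i+\eta:\ \sum_{i\in I}\mu_i\chi_i+\eta\leq \nu_I^Q(\chi)\ \ \forall \chi\in\{0,1\}^I\Big\}.$$ *)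

theory Defs
  imports Complex_Main
begin

text \<open>Ground set [n] is modelled by a finite type 'n (so n = CARD('n)); a vector in
  R^n is a function 'n \<Rightarrow> real.\<close>

definition unit_box :: "('n \<Rightarrow> real) set" where
  "unit_box = {x. \<forall>i. 0 \<le> x i \<and> x i \<le> 1}"

definition binary_vecs :: "('n \<Rightarrow> real) set" where
  "binary_vecs = {x. \<forall>i. x i = 0 \<or> x i = 1}"

definition chi :: "'n set \<Rightarrow> 'n \<Rightarrow> real" where
  "chi A = (\<lambda>i. if i \<in> A then 1 else 0)"

definition monotone_submodular :: "('n set \<Rightarrow> real) \<Rightarrow> bool" where
  "monotone_submodular f \<longleftrightarrow>
     (\<forall>S T. S \<subseteq> T \<longrightarrow> f S \<le> f T) \<and>
     (\<forall>S j k. j \<notin> S \<and> k \<notin> S \<and> j \<noteq> k \<longrightarrow>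
        f (insert j S) + f (insert k S) \<ge> f (insert j (insert k S)) + f S)"

text \<open>Binary vectors indexed by I, i.e. elements of {0,1}^I, represented as functions
  which vanish outside I.\<close>
definition binary_on :: "'n set \<Rightarrow> ('n \<Rightarrow> real) set" where
  "binary_on I = {c. (\<forall>i\<in>I. c i = 0 \<or> c i = 1) \<and> (\<forall>i. i \<notin> I \<longrightarrow> c i = 0)}"

definition nu :: "(('n \<Rightarrow> real) \<Rightarrow> real) \<Rightarrow> 'n set \<Rightarrow> ('n \<Rightarrow> real) \<Rightarrow> real" where
  "nu Q I c = Inf {Q x | x. x \<in> unit_box \<and> (\<forall>i\<in>I. x i = c i)}"

text \<open>Cut violation function g_xhat^Q(I) (the LP optimum, written as a supremum).\<close>
definition cut_violation :: "(('n \<Rightarrow> real) \<Rightarrow> real) \<Rightarrow> ('n \<Rightarrow> real) \<Rightarrow> 'n set \<Rightarrow> real" where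
  "cut_violation Q xhat I = Sup {(\<Sum>i\<in>I. \<mu> i * xhat i) + \<eta> | \<mu> \<eta>.
      \<forall>c\<in>binary_on I. (\<Sum>i\<in>I. \<mu> i * c i) + \<eta> \<le> nu Q I c}"

end

theory Submission
  imports Defs
begin

lemma rep_exists:
  fixes V :: "real set"
  assumes "finite V" "\<forall>x\<in>V. 0 \<le> x"
  shows "\<exists>(m::nat) l v. (\<forall>k<m. 0 \<le> l k \<and> v k \<in> V) \<and> (\<Sum>k<m. l k) = Max (insert 0 V)
     \<and> (\<forall>x\<in>V. x = (\<Sum>k<m. if v k \<le> x then l k else 0))"
  using assms
proof (induction V rule: finite_linorder_max_induct)
  case empty
  show ?case by (auto intro!: exI[where x="0::nat"])
next
  case (insert b A)
  then obtain m :: nat and l v where mlv: "\<forall>k<m. 0 \<le> l k \<and> v k \<in> A" "(\<Sum>k<m. l k) = Max (insert 0 A)"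
     "\<forall>x\<in>A. x = (\<Sum>k<m. if v k \<le> x then l k else 0)" by auto
  define M where "M = Max (insert 0 A)"
  have b0: "0 \<le> b" using insert by auto
  have "M \<in> insert 0 A" unfolding M_def by (rule Max_in) (use insert in auto)
  hence Mb: "M \<le> b" using insert b0 by auto
  define l' where "l' = l(m := b - M)"
  define v' where "v' = v(m := b)"
  have maxb: "Max (insert 0 (insert b A)) = b"
    by (rule Max_eqI) (use insert b0 in auto)
  show ?case
  proof (rule exI[where x="Suc m"], rule exI[where x=l'], rule exI[where x=v'], intro conjI)
    show "\<forall>k<Suc m. 0 \<le> l' k \<and> v' k \<in> insert b A"
      using mlv(1) Mb by (auto simp: l'_def v'_def less_Suc_eq)
    have "(\<Sum>k<Suc m. l' k) = (\<Sum>k<m. l k) + (b - M)"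
      by (simp add: l'_def)
    thus "(\<Sum>k<Suc m. l' k) = Max (insert 0 (insert b A))"
      using maxb mlv(2) M_def by simp
    show "\<forall>x\<in>insert b A. x = (\<Sum>k<Suc m. if v' k \<le> x then l' k else 0)"
    proof
      fix x assume x: "x \<in> insert b A"
      show "x = (\<Sum>k<Suc m. if v' k \<le> x then l' k else 0)"
      proof (cases "x = b")
        case True
        have "(\<Sum>k<m. if v' k \<le> x then l' k else 0) = (\<Sum>k<m. l k)"
        proof (rule sum.cong)
          fix k assume k: "k \<in> {..<m}"
          then have "v k \<in> A" using mlv(1) by auto
          then have "v k < b" using insert.hyps by auto
          then show "(if v' k \<le> x then l' k else 0) = l k"
            using k True by (simp add: l'_def v'_def)
        qed simp
        then show ?thesis using True mlv(2) M_def by (simp add: v'_def l'_def)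
      next
        case False
        hence xA: "x \<in> A" "x < b" using x insert by auto
        have "(\<Sum>k<m. if v' k \<le> x then l' k else 0) = (\<Sum>k<m. if v k \<le> x then l k else 0)"
          by (rule sum.cong) (auto simp: l'_def v'_def)
        then show ?thesis using xA mlv(3) by (simp add: v'_def l'_def)
      qed
    qed
  qed
qed

lemma dimret_aux:
  fixes f :: "'a set \<Rightarrow> real"
  assumes fsub: "\<And>j k S. j\<notin>S \<Longrightarrow> k\<notin>S \<Longrightarrow> j\<noteq>k \<Longrightarrow>
      f (insert j (insert k S)) + f S \<le> f (insert j S) + f (insert k S)"
  shows "finite D \<Longrightarrow> p \<notin> A \<Longrightarrow> p \<notin> D \<Longrightarrow> D \<inter> A = {} \<Longrightarrow>
     f (insert p (A \<union> D)) + f A \<le> f (insert p A) + f (A \<union> D)"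
proof (induction D arbitrary: A rule: finite_induct)
  case empty
  then show ?case by simp
next
  case (insert d D)
  have IH: "f (insert p (insert d A \<union> D)) + f (insert d A) \<le> f (insert p (insert d A)) + f (insert d A \<union> D)"
    using insert.IH[of "insert d A"] insert.prems insert.hyps by auto
  have s: "f (insert p (insert d A)) + f A \<le> f (insert p A) + f (insert d A)"
    using fsub[of p A d] insert.prems by auto
  have "A \<union> insert d D = insert d A \<union> D" by auto
  then show ?case using IH s by simp
qed

lemma dimret:
  fixes f :: "'a set \<Rightarrow> real"
  assumes fsub: "\<And>j k S. j\<notin>S \<Longrightarrow> k\<notin>S \<Longrightarrow> j\<noteq>k \<Longrightarrow>
      f (insert j (insert k S)) + f S \<le> f (insert j S) + f (insert k S)"
    and "finite B" "A \<subseteq> B" "p \<notin> B"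
  shows "f (insert p B) + f A \<le> f (insert p A) + f B"
proof -
  have "A \<union> (B - A) = B" using assms by auto
  moreover have "f (insert p (A \<union> (B - A))) + f A \<le> f (insert p A) + f (A \<union> (B - A))"
    by (rule dimret_aux[OF fsub]) (use assms in auto)
  ultimately show ?thesis by simp
qed

lemma restrict_sub:
  fixes f :: "'a set \<Rightarrow> real"
  assumes fsub: "\<And>j k S. j\<notin>S \<Longrightarrow> k\<notin>S \<Longrightarrow> j\<noteq>k \<Longrightarrow>
      f (insert j (insert k S)) + f S \<le> f (insert j S) + f (insert k S)"
    and "j\<notin>S" "k\<notin>S" "j\<noteq>k"
  shows "f (insert j (insert k S) \<inter> T) + f (S \<inter> T) \<le> f (insert j S \<inter> T) + f (insert k S \<inter> T)"
proof (cases "j \<in> T")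
  case True
  then show ?thesis
  proof (cases "k \<in> T")
    case True
    then show ?thesis using fsub[of j "S \<inter> T" k] assms \<open>j \<in> T\<close> by (simp add: Int_insert_left)
  next
    case False
    then show ?thesis using \<open>j \<in> T\<close> by (simp add: Int_insert_left)
  qed
next
  case False
  then show ?thesis by (simp add: Int_insert_left)
qed

theorem proposition2:
  fixes Q Q' :: "('n::finite \<Rightarrow> real) \<Rightarrow> real" and xhat :: "'n \<Rightarrow> real"
  assumes ext: "\<forall>x\<in>binary_vecs. Q x = Q' x"
    and sub: "monotone_submodular (\<lambda>A. Q' (chi A))"
    and mono: "\<forall>x\<in>unit_box. \<forall>y\<in>unit_box. (\<forall>i. x i \<le> y i) \<longrightarrow> Q x \<le> Q y"
    and xhat: "xhat \<in> unit_box"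
  shows "monotone_submodular (cut_violation Q xhat)"
proof -
  define f where "f A = Q (chi A)" for A
  have chi_bin: "chi A \<in> binary_vecs" for A by (auto simp: binary_vecs_def chi_def)
  have fQ': "f A = Q' (chi A)" for A using ext chi_bin[of A] by (simp add: f_def)
  have fmono: "A \<subseteq> B \<Longrightarrow> f A \<le> f B" for A B
    using sub unfolding monotone_submodular_def fQ' by blast
  have fsub: "\<And>j k S. j\<notin>S \<Longrightarrow> k\<notin>S \<Longrightarrow> j\<noteq>k \<Longrightarrow>
      f (insert j (insert k S)) + f S \<le> f (insert j S) + f (insert k S)"
    using sub unfolding monotone_submodular_def fQ' by blast
  have xb: "0 \<le> xhat i" "xhat i \<le> 1" for i using xhat by (auto simp: unit_box_def)
  obtain m :: nat and l v where mlv: "\<forall>k<m. 0 \<le> l k \<and> v k \<in> range xhat"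
    "(\<Sum>k<m. l k) = Max (insert 0 (range xhat))"
    "\<forall>x\<in>range xhat. x = (\<Sum>k<m. if v k \<le> x then l k else 0)"
    using rep_exists[of "range xhat"] xb by auto
  define s where "s = (\<Sum>k<m. l k)"
  have s1: "s \<le> 1" unfolding s_def mlv(2) by (rule Max.boundedI) (use xb in auto)
  have l0: "k < m \<Longrightarrow> 0 \<le> l k" for k using mlv(1) by auto
  define Th where "Th k = {i. v k \<le> xhat i}" for k
  define L where "L I = (1 - s) * f {} + (\<Sum>k<m. l k * f (I \<inter> Th k))" for I
  have rep: "xhat i = (\<Sum>k<m. if i \<in> Th k then l k else 0)" for i
    using mlv(3) by (auto simp: Th_def)
  have nuf: "nu Q I (chi C) = f C" if "C \<subseteq> I" for C I
    unfolding nu_def f_def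
  proof (rule cInf_eq_minimum)
    have "chi C \<in> unit_box" by (auto simp: unit_box_def chi_def)
    then show "Q (chi C) \<in> {Q x |x. x \<in> unit_box \<and> (\<forall>i\<in>I. x i = chi C i)}" by blast
  next
    fix y assume "y \<in> {Q x |x. x \<in> unit_box \<and> (\<forall>i\<in>I. x i = chi C i)}"
    then obtain x where x: "y = Q x" "x \<in> unit_box" "\<forall>i\<in>I. x i = chi C i" by blast
    have "\<forall>i. chi C i \<le> x i"
    proof
      fix i show "chi C i \<le> x i"
        using x that by (cases "i \<in> I") (auto simp: chi_def unit_box_def)
    qed
    moreover have "chi C \<in> unit_box" by (auto simp: unit_box_def chi_def)
    ultimately show "Q (chi C) \<le> y" using mono x by blast
  qed
  have binchar: "c = chi {i\<in>I. c i = 1}" "{i\<in>I. c i = 1} \<subseteq> I" if "c \<in> binary_on I" for c I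
    using that by (auto simp: binary_on_def chi_def fun_eq_iff)
  have chi_on: "C \<subseteq> I \<Longrightarrow> chi C \<in> binary_on I" for C I
    by (auto simp: binary_on_def chi_def)
  have upper: "(\<Sum>i\<in>I. \<mu> i * xhat i) + \<eta> \<le> L I"
    if feas: "\<forall>c\<in>binary_on I. (\<Sum>i\<in>I. \<mu> i * c i) + \<eta> \<le> nu Q I c" for I \<mu> \<eta>
  proof -
    have e0: "\<eta> \<le> f {}" using feas chi_on[of "{}" I] nuf[of "{}" I] by (auto simp: chi_def)
    have ek: "(\<Sum>i\<in>I. \<mu> i * chi (I \<inter> Th k) i) + \<eta> \<le> f (I \<inter> Th k)" for k
      using feas chi_on[of "I \<inter> Th k" I] nuf[of "I \<inter> Th k" I] by auto
    have "(\<Sum>i\<in>I. \<mu> i * xhat i) = (\<Sum>i\<in>I. \<Sum>k<m. l k * (\<mu> i * chi (I \<inter> Th k) i))"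
      by (rule sum.cong) (auto simp: rep[of _] sum_distrib_left chi_def intro!: sum.cong)
    also have "\<dots> = (\<Sum>k<m. \<Sum>i\<in>I. l k * (\<mu> i * chi (I \<inter> Th k) i))" by (rule sum.swap)
    also have "\<dots> = (\<Sum>k<m. l k * (\<Sum>i\<in>I. \<mu> i * chi (I \<inter> Th k) i))" by (simp add: sum_distrib_left)
    finally have A: "(\<Sum>i\<in>I. \<mu> i * xhat i) = (\<Sum>k<m. l k * (\<Sum>i\<in>I. \<mu> i * chi (I \<inter> Th k) i))" .
    have B: "(\<Sum>k<m. l k * ((\<Sum>i\<in>I. \<mu> i * chi (I \<inter> Th k) i) + \<eta>))
        = (\<Sum>k<m. l k * (\<Sum>i\<in>I. \<mu> i * chi (I \<inter> Th k) i)) + s * \<eta>"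
      by (simp add: distrib_left sum.distrib sum_distrib_right s_def)
    have C: "(\<Sum>k<m. l k * ((\<Sum>i\<in>I. \<mu> i * chi (I \<inter> Th k) i) + \<eta>)) \<le> (\<Sum>k<m. l k * f (I \<inter> Th k))"
      by (rule sum_mono) (use l0 ek in \<open>auto intro: mult_left_mono\<close>)
    have D: "(1 - s) * \<eta> \<le> (1 - s) * f {}" using s1 e0 by (auto intro: mult_left_mono)
    show ?thesis using A B C D unfolding L_def by (simp add: algebra_simps)
  qed
  have achieve: "\<exists>\<mu> \<eta>. (\<forall>c\<in>binary_on I. (\<Sum>i\<in>I. \<mu> i * c i) + \<eta> \<le> nu Q I c)
       \<and> (\<Sum>i\<in>I. \<mu> i * xhat i) + \<eta> = L I" for I
  proof (induction "card I" arbitrary: I rule: less_induct)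
    case less
    show ?case
    proof (cases "I = {}")
      case True
      have "L I = f {}" using True by (simp add: L_def s_def sum_distrib_left algebra_simps)
      moreover have "\<forall>c\<in>binary_on I. (\<Sum>i\<in>I. 0 * c i) + f {} \<le> nu Q I c"
      proof
        fix c assume "c \<in> binary_on I"
        then have "c = chi {}" using binchar[of c I] True by simp
        then show "(\<Sum>i\<in>I. 0 * c i) + f {} \<le> nu Q I c" using nuf[of "{}" I] by simp
      qed
      ultimately show ?thesis using True by (intro exI[of _ "\<lambda>_. 0"] exI[of _ "f {}"]) auto
    next
      case False
      have finI: "finite I" by simp
      have "Min (xhat ` I) \<in> xhat ` I" using False by (intro Min_in) auto
      then obtain p where p: "p \<in> I" "xhat p = Min (xhat ` I)" by auto
      have pmin: "\<forall>i\<in>I. xhat p \<le> xhat i" using p by simp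
      define I' where "I' = I - {p}"
      have II': "I = insert p I'" "p \<notin> I'" using p by (auto simp: I'_def)
      have "card I' < card I" unfolding I'_def by (metis card_Diff1_less finI p(1))
      then obtain \<mu>' \<eta> where IH: "\<forall>c\<in>binary_on I'. (\<Sum>i\<in>I'. \<mu>' i * c i) + \<eta> \<le> nu Q I' c"
        "(\<Sum>i\<in>I'. \<mu>' i * xhat i) + \<eta> = L I'" using less by blast
      define \<mu> where "\<mu> = \<mu>'(p := f I - f I')"
      have sumsplit: "(\<Sum>i\<in>I. \<mu> i * c i) = (\<Sum>i\<in>I'. \<mu>' i * c i) + (f I - f I') * c p" for c
      proof -
        have "(\<Sum>i\<in>I'. \<mu> i * c i) = (\<Sum>i\<in>I'. \<mu>' i * c i)"
          by (rule sum.cong) (use II' in \<open>auto simp: \<mu>_def\<close>)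
        then show ?thesis using II' by (simp add: \<mu>_def)
      qed
      have feas: "\<forall>c\<in>binary_on I. (\<Sum>i\<in>I. \<mu> i * c i) + \<eta> \<le> nu Q I c"
      proof
        fix c assume c: "c \<in> binary_on I"
        define C where "C = {i\<in>I. c i = 1}"
        have cC: "c = chi C" "C \<subseteq> I" using binchar[OF c] by (auto simp: C_def)
        have e1: "(\<Sum>i\<in>I'. \<mu>' i * chi C i) = (\<Sum>i\<in>I'. \<mu>' i * chi (C - {p}) i)"
          by (rule sum.cong) (use II' in \<open>auto simp: chi_def\<close>)
        have sub': "C - {p} \<subseteq> I'" using cC II' by auto
        have ih: "(\<Sum>i\<in>I'. \<mu>' i * chi (C - {p}) i) + \<eta> \<le> f (C - {p})"
          using IH(1) chi_on[OF sub'] nuf[OF sub'] by auto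
        have nI: "nu Q I c = f C" using cC nuf by simp
        show "(\<Sum>i\<in>I. \<mu> i * c i) + \<eta> \<le> nu Q I c"
        proof (cases "p \<in> C")
          case True
          have dr: "f (insert p I') + f (C - {p}) \<le> f (insert p (C - {p})) + f I'"
            by (rule dimret[OF fsub]) (use sub' II' in auto)
          have "insert p (C - {p}) = C" using True by auto
          then show ?thesis using dr ih e1 sumsplit[of c] cC True nI II'(1)
            by (simp add: chi_def)
        next
          case False
          then have "C - {p} = C" by auto
          then show ?thesis using ih e1 sumsplit[of c] cC False nI
            by (simp add: chi_def)
        qed
      qed
      have trm: "l k * f (I \<inter> Th k) = l k * f (I' \<inter> Th k) + (if p \<in> Th k then l k else 0) * (f I - f I')" for k
      proof (cases "p \<in> Th k")
        case True
        then have "I \<inter> Th k = I" "I' \<inter> Th k = I'" using pmin by (auto simp: Th_def I'_def)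
        then show ?thesis using True by (simp add: algebra_simps)
      next
        case False
        then have "I \<inter> Th k = I' \<inter> Th k" using II' by auto
        then show ?thesis using False by simp
      qed
      have "(\<Sum>k<m. l k * f (I \<inter> Th k)) = (\<Sum>k<m. l k * f (I' \<inter> Th k)) + xhat p * (f I - f I')"
        by (simp add: trm sum.distrib sum_distrib_right[symmetric] rep[of p])
      then have LI: "L I = L I' + xhat p * (f I - f I')" by (simp add: L_def)
      have "(\<Sum>i\<in>I. \<mu> i * xhat i) + \<eta> = L I"
        using sumsplit[of xhat] IH(2) LI by (simp add: algebra_simps)
      then show ?thesis using feas by blast
    qed
  qed
  have gL: "cut_violation Q xhat I = L I" for I
    unfolding cut_violation_def
  proof (rule cSup_eq_maximum)
    obtain \<mu> \<eta> where "\<forall>c\<in>binary_on I. (\<Sum>i\<in>I. \<mu> i * c i) + \<eta> \<le> nu Q I c"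
       "(\<Sum>i\<in>I. \<mu> i * xhat i) + \<eta> = L I" using achieve by blast
    then show "L I \<in> {(\<Sum>i\<in>I. \<mu> i * xhat i) + \<eta> |\<mu> \<eta>.
       \<forall>c\<in>binary_on I. (\<Sum>i\<in>I. \<mu> i * c i) + \<eta> \<le> nu Q I c}" by force
  next
    fix y assume "y \<in> {(\<Sum>i\<in>I. \<mu> i * xhat i) + \<eta> |\<mu> \<eta>.
       \<forall>c\<in>binary_on I. (\<Sum>i\<in>I. \<mu> i * c i) + \<eta> \<le> nu Q I c}"
    then show "y \<le> L I" using upper by blast
  qed
  have "monotone_submodular L"
    unfolding monotone_submodular_def
  proof (intro conjI allI impI)
    fix S T :: "'n set" assume "S \<subseteq> T"
    then have "(\<Sum>k<m. l k * f (S \<inter> Th k)) \<le> (\<Sum>k<m. l k * f (T \<inter> Th k))"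
      by (intro sum_mono mult_left_mono fmono) (use l0 in auto)
    then show "L S \<le> L T" by (simp add: L_def)
  next
    fix S :: "'n set" and j k assume jk: "j \<notin> S \<and> k \<notin> S \<and> j \<noteq> k"
    have pt: "l kk * f (insert j (insert k S) \<inter> Th kk) + l kk * f (S \<inter> Th kk)
        \<le> l kk * f (insert j S \<inter> Th kk) + l kk * f (insert k S \<inter> Th kk)" if "kk \<in> {..<m}" for kk
    proof -
      have "f (insert j (insert k S) \<inter> Th kk) + f (S \<inter> Th kk) \<le> f (insert j S \<inter> Th kk) + f (insert k S \<inter> Th kk)"
        by (rule restrict_sub[OF fsub]) (use jk in auto)
      then have "l kk * (f (insert j (insert k S) \<inter> Th kk) + f (S \<inter> Th kk))
          \<le> l kk * (f (insert j S \<inter> Th kk) + f (insert k S \<inter> Th kk))"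
        using l0 that by (intro mult_left_mono) auto
      then show ?thesis by (simp add: distrib_left)
    qed
    have "(\<Sum>kk<m. l kk * f (insert j (insert k S) \<inter> Th kk)) + (\<Sum>kk<m. l kk * f (S \<inter> Th kk))
       \<le> (\<Sum>kk<m. l kk * f (insert j S \<inter> Th kk)) + (\<Sum>kk<m. l kk * f (insert k S \<inter> Th kk))"
      unfolding sum.distrib[symmetric] by (rule sum_mono) (rule pt)
    then show "L (insert j S) + L (insert k S) \<ge> L (insert j (insert k S)) + L S"
      by (simp add: L_def)
  qed
  then show ?thesis using gL proof - have "cut_violation Q xhat = L" using gL by blast then show ?thesis using `monotone_submodular L` by simp qed
qed

end
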